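(* Let $R\ge 1$, let $q^{CAV}_1,\dots,q^{CAV}_R\ge 0$ be route flows with $q^{CAV}=\sum_r q^{CAV}_r>0$, let $t^{CAV}_1,\dots,t^{CAV}_R>0$ be route travel times, and let $(I,di)$ be the space of drivers with total mass $|I|=q^{CAV}$. Then: (i) Every assignment plan $\mu$ defines an offer profile, namely $T^{CAV}_i:=\sum_r t^{CAV}_r\mu(i,r)$. (ii) If $R=2$, then every offer profile $T^{CAV}$ is feasible. Moreover, if $t^{CAV}_1\neq t^{CAV}_2$, the assignment plan inducing $T^{CAV}$ is unique (up to $di$-almost everywhere equality). (iii) If $R\ge 3$, then not every offer profile need be feasible: there exist flows and travel times with three routes and an offer profile subject to them which is not feasible.
   Context: Drivers are indexed by a measure space $(I,di)$ with total mass $|I|=q^{CAV}$: either infinitesimal drivers ($I$ an interval with Lebesgue measure) or atomic drivers ($I=\{1,\dots,q^{CAV}\}$ with counting measure). Given flows $\mathbf q^{CAV}=(q^{CAV}_1,\dots,q^{CAV}_R)$ and travel times $\mathbf t^{CAV}=(t^{CAV}_1,\dots,t^{CAV}_R)$, an offer profile subject to $(\mathbf q^{CAV},\mathbf t^{CAV})$ is a measurable function $T^{CAV}:I\to[\min_r t^{CAV}_r,\max_r t^{CAV}_r]$ with $\frac1{|I|}\int_I T^{CAV}_i\,di=\frac1{q^{CAV}}\sum_r q^{CAV}_r t^{CAV}_r$. An assignment plan inducing $T^{CAV}$ is a measurable $\mu:I\times\{1,\dots,R\}\to[0,1]$ such that $\int_I\mu(i,r)\,di=q^{CAV}_r$ for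 every $r$, $\sum_r\mu(i,r)=1$ for a.e. $i$, and $\sum_r t^{CAV}_r\mu(i,r)=T^{CAV}_i$ for a.e. $i$. An offer profile is feasible if it is induced by at least one assignment plan. *)

theory Defs
  imports "HOL-Analysis.Analysis"
begin

text \<open>Driver space of total mass Q: either infinitesimal drivers (an interval of length Q
  with Lebesgue measure) or atomic drivers (the set 1..Q with counting measure, Q a natural).\<close>
definition driver_space :: "real measure \<Rightarrow> real \<Rightarrow> bool" where
  "driver_space M Q \<longleftrightarrow>
     (\<exists>a. M = restrict_space lebesgue {a..a+Q}) \<or>
     (\<exists>n::nat. Q = real n \<and> M = count_space (real ` {1..n}))"

definition total_flow :: "nat \<Rightarrow> (nat \<Rightarrow> real) \<Rightarrow> real" where
  "total_flow R q = (\<Sum>r=1..R. q r)"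

text \<open>Offer profile subject to (q,t).  Functions are taken up to a.e. equality, so the range
  condition is required almost everywhere.\<close>
definition offer_profile ::
  "'i measure \<Rightarrow> nat \<Rightarrow> (nat \<Rightarrow> real) \<Rightarrow> (nat \<Rightarrow> real) \<Rightarrow> ('i \<Rightarrow> real) \<Rightarrow> bool" where
  "offer_profile M R q t T \<longleftrightarrow>
     T \<in> borel_measurable M \<and>
     (AE i in M. T i \<in> {Min (t ` {1..R}) .. Max (t ` {1..R})}) \<and>
     (1 / measure M (space M)) * (\<integral>i. T i \<partial>M) = (1 / total_flow R q) * (\<Sum>r=1..R. q r * t r)"

definition assignment_plan ::
  "'i measure \<Rightarrow> nat \<Rightarrow> (nat \<Rightarrow> real) \<Rightarrow> ('i \<Rightarrow> nat \<Rightarrow> real) \<Rightarrow> bool" where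
  "assignment_plan M R q \<mu> \<longleftrightarrow>
     (\<forall>r\<in>{1..R}. (\<lambda>i. \<mu> i r) \<in> borel_measurable M) \<and>
     (\<forall>i\<in>space M. \<forall>r\<in>{1..R}. \<mu> i r \<in> {0..1}) \<and>
     (\<forall>r\<in>{1..R}. (\<integral>i. \<mu> i r \<partial>M) = q r) \<and>
     (AE i in M. (\<Sum>r=1..R. \<mu> i r) = 1)"

definition induces ::
  "'i measure \<Rightarrow> nat \<Rightarrow> (nat \<Rightarrow> real) \<Rightarrow> ('i \<Rightarrow> nat \<Rightarrow> real) \<Rightarrow> ('i \<Rightarrow> real) \<Rightarrow> bool" where
  "induces M R t \<mu> T \<longleftrightarrow> (AE i in M. (\<Sum>r=1..R. t r * \<mu> i r) = T i)"

definition feasible ::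
  "'i measure \<Rightarrow> nat \<Rightarrow> (nat \<Rightarrow> real) \<Rightarrow> (nat \<Rightarrow> real) \<Rightarrow> ('i \<Rightarrow> real) \<Rightarrow> bool" where
  "feasible M R q t T \<longleftrightarrow> (\<exists>\<mu>. assignment_plan M R q \<mu> \<and> induces M R t \<mu> T)"

end

theory Submission imports Defs begin

lemma driver_fin:
  assumes "driver_space M Q" "Q > 0"
  shows "finite_measure M \<and> measure M (space M) = Q"
  using assms(1) unfolding driver_space_def
proof (elim disjE exE conjE)
  fix a assume M: "M = restrict_space lebesgue {a..a+Q}"
  have sp: "space M = {a..a+Q}" using M by (simp add: space_restrict_space)
  have "finite_measure M" unfolding M
    using assms(2) by (intro finite_measureI) (simp add: emeasure_restrict_space space_restrict_space)
  moreover have "measure M (space M) = Q" using assms(2) unfolding sp M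
    by (simp add: measure_restrict_space)
  ultimately show ?thesis by simp
next
  fix n :: nat assume Qn: "Q = real n" and M: "M = count_space (real ` {1..n})"
  have "card (real ` {1..n}) = n" by (simp add: card_image)
  then show ?thesis using M Qn by (simp add: finite_measure_count_space)
qed

lemma part1:
  assumes fm: "finite_measure M" and Q: "measure M (space M) = total_flow R q"
    and Qp: "total_flow R q > 0" and R: "R \<ge> 1"
    and ap: "assignment_plan M R q \<mu>"
  shows "offer_profile M R q t (\<lambda>i. \<Sum>r=1..R. t r * \<mu> i r)"
proof -
  interpret finite_measure M by (rule fm)
  have meas: "\<forall>r\<in>{1..R}. (\<lambda>i. \<mu> i r) \<in> borel_measurable M"
    and rng: "\<forall>i\<in>space M. \<forall>r\<in>{1..R}. \<mu> i r \<in> {0..1}"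
    and int: "\<forall>r\<in>{1..R}. (\<integral>i. \<mu> i r \<partial>M) = q r"
    and s1: "AE i in M. (\<Sum>r=1..R. \<mu> i r) = 1"
    using ap unfolding assignment_plan_def by auto
  have intg: "integrable M (\<lambda>i. \<mu> i r)" if "r \<in> {1..R}" for r
  proof (rule integrable_const_bound[where B=1])
    show "AE x in M. norm (\<mu> x r) \<le> 1" using rng that by (intro AE_I2) auto
  qed (use meas that in auto)
  have m: "(\<lambda>i. \<Sum>r=1..R. t r * \<mu> i r) \<in> borel_measurable M"
    using meas by (intro borel_measurable_sum borel_measurable_times) auto
  have fin: "finite (t ` {1..R})" "t ` {1..R} \<noteq> {}" using R by auto
  have "AE i in M. (\<Sum>r=1..R. t r * \<mu> i r) \<in> {Min (t ` {1..R}) .. Max (t ` {1..R})}"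
    using s1
  proof (rule AE_mp[OF _ AE_I2], intro impI)
    fix i assume i: "i \<in> space M" and s: "(\<Sum>r=1..R. \<mu> i r) = 1"
    have "Min (t ` {1..R}) = (\<Sum>r=1..R. Min (t ` {1..R}) * \<mu> i r)"
      unfolding sum_distrib_left[symmetric] s by simp
    also have "\<dots> \<le> (\<Sum>r=1..R. t r * \<mu> i r)"
      using rng i fin by (intro sum_mono mult_right_mono) auto
    finally have a: "Min (t ` {1..R}) \<le> (\<Sum>r=1..R. t r * \<mu> i r)" .
    have "(\<Sum>r=1..R. t r * \<mu> i r) \<le> (\<Sum>r=1..R. Max (t ` {1..R}) * \<mu> i r)"
      using rng i fin by (intro sum_mono mult_right_mono) auto
    also have "\<dots> = Max (t ` {1..R})"
      unfolding sum_distrib_left[symmetric] s by simp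
    finally show "(\<Sum>r=1..R. t r * \<mu> i r) \<in> {Min (t ` {1..R}) .. Max (t ` {1..R})}"
      using a by simp
  qed
  moreover have "(\<integral>i. (\<Sum>r=1..R. t r * \<mu> i r) \<partial>M) = (\<Sum>r=1..R. q r * t r)"
  proof -
    have "(\<integral>i. (\<Sum>r=1..R. t r * \<mu> i r) \<partial>M) = (\<Sum>r=1..R. (\<integral>i. t r * \<mu> i r \<partial>M))"
      using intg by (intro Bochner_Integration.integral_sum) auto
    also have "\<dots> = (\<Sum>r=1..R. q r * t r)"
      using int by (intro sum.cong) (auto simp: mult.commute)
    finally show ?thesis .
  qed
  ultimately show ?thesis unfolding offer_profile_def using m Q by simp
qed

lemma sum12: "sum f {1..2::nat} = f 1 + f 2" "sum f {Suc 0..2} = f (Suc 0) + f 2"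
  by (simp_all add: numeral_2_eq_2)

lemma part2a:
  assumes fm: "finite_measure M" and Q: "measure M (space M) = total_flow 2 q"
    and Qp: "total_flow 2 q > 0" and qn: "\<forall>r\<in>{1..2}. q r \<ge> 0"
    and op: "offer_profile M 2 q t T"
  shows "feasible M 2 q t T"
proof -
  interpret finite_measure M by (rule fm)
  have tf: "total_flow 2 q = q 1 + q 2" by (simp add: total_flow_def sum12)
  have q1: "q 1 \<ge> 0" and q2: "q 2 \<ge> 0" using qn by auto
  have Tm: "T \<in> borel_measurable M"
    and Tr: "AE i in M. T i \<in> {Min (t ` {1..2}) .. Max (t ` {1..2})}"
    and Ti: "(1 / measure M (space M)) * (\<integral>i. T i \<partial>M) = (1 / total_flow 2 q) * (\<Sum>r=1..2. q r * t r)"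
    using op unfolding offer_profile_def by auto
  have img: "t ` {1..2} = {t 1, t 2}" by (auto simp: numeral_2_eq_2 le_Suc_eq)
  have Tr': "AE i in M. min (t 1) (t 2) \<le> T i \<and> T i \<le> max (t 1) (t 2)"
    using Tr unfolding img by auto
  have intT: "(\<integral>i. T i \<partial>M) = q 1 * t 1 + q 2 * t 2"
    using Ti Q Qp by (simp add: sum12)
  have intgT: "integrable M T"
  proof (rule integrable_const_bound[where B="\<bar>t 1\<bar> + \<bar>t 2\<bar>"])
    show "AE x in M. norm (T x) \<le> \<bar>t 1\<bar> + \<bar>t 2\<bar>" using Tr' by eventually_elim auto
  qed (rule Tm)
  show ?thesis
  proof (cases "t 1 = t 2")
    case True
    define \<mu> where "\<mu> = (\<lambda>(i::'a) (r::nat). q r / total_flow 2 q)"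
    have "assignment_plan M 2 q \<mu>"
      unfolding assignment_plan_def \<mu>_def using Q Qp q1 q2 tf
      by (auto simp: sum12 numeral_2_eq_2 le_Suc_eq divide_simps)
    moreover have "induces M 2 t \<mu> T"
      unfolding induces_def using Tr'
    proof eventually_elim
      case (elim i)
      have Ti: "T i = t 2" using elim True by auto
      have "t 1 * (q 1 / total_flow 2 q) + t 2 * (q 2 / total_flow 2 q) = t 2 * ((q 1 + q 2) / total_flow 2 q)"
        using True by (simp add: add_divide_distrib algebra_simps)
      also have "\<dots> = t 2" using tf Qp by simp
      finally show ?case using Ti unfolding \<mu>_def sum12 by simp
    qed
    ultimately show ?thesis unfolding feasible_def by blast
  next
    case False
    define p where "p = (\<lambda>i. max 0 (min 1 ((T i - t 2) / (t 1 - t 2))))"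
    define \<mu> where "\<mu> = (\<lambda>i (r::nat). if r = 1 then p i else 1 - p i)"
    have pae: "AE i in M. p i = (T i - t 2) / (t 1 - t 2)"
      using Tr'
    proof eventually_elim
      case (elim i)
      show ?case
      proof (cases "t 1 < t 2")
        case True
        then show ?thesis using elim unfolding p_def by (auto simp: divide_simps)
      next
        case f: False
        then have "t 2 < t 1" using False by simp
        then show ?thesis using elim unfolding p_def by (auto simp: divide_simps)
      qed
    qed
    have pm: "p \<in> borel_measurable M" unfolding p_def
      by (intro borel_measurable_max borel_measurable_min borel_measurable_divide borel_measurable_diff Tm borel_measurable_const)
    have ip: "(\<integral>i. p i \<partial>M) = q 1"
    proof -
      have "(\<integral>i. p i \<partial>M) = (\<integral>i. (T i - t 2) / (t 1 - t 2) \<partial>M)"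
        by (rule integral_cong_AE) (use pm Tm pae in auto)
      also have "\<dots> = ((\<integral>i. T i \<partial>M) - t 2 * measure M (space M)) / (t 1 - t 2)"
        using intgT by simp
      also have "\<dots> = q 1" using intT Q tf False by (simp add: divide_simps algebra_simps)
      finally show ?thesis .
    qed
    have intgp: "integrable M p"
    proof (rule integrable_const_bound[where B=1])
      show "AE x in M. norm (p x) \<le> 1" by (intro AE_I2) (auto simp: p_def)
    qed (rule pm)
    have "assignment_plan M 2 q \<mu>"
      unfolding assignment_plan_def
    proof (intro conjI ballI)
      fix r :: nat assume "r \<in> {1..2}"
      then have r: "r = 1 \<or> r = 2" by auto
      show "(\<lambda>i. \<mu> i r) \<in> borel_measurable M" using r pm unfolding \<mu>_def by auto
      show "(\<integral>i. \<mu> i r \<partial>M) = q r"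
        using r ip intgp Q tf unfolding \<mu>_def by auto
      fix i assume "i \<in> space M"
      show "\<mu> i r \<in> {0..1}" using r unfolding \<mu>_def p_def by auto
    next
      show "AE i in M. (\<Sum>r=1..2. \<mu> i r) = 1" by (simp add: sum12 \<mu>_def)
    qed
    moreover have "induces M 2 t \<mu> T"
      unfolding induces_def using pae
    proof eventually_elim
      case (elim i)
      then show ?case using False unfolding \<mu>_def by (simp add: sum12 divide_simps algebra_simps)
    qed
    ultimately show ?thesis unfolding feasible_def by blast
  qed
qed

lemma part2b:
  assumes "t 1 \<noteq> t 2" "assignment_plan M 2 q \<mu>" "induces M 2 t \<mu> T"
    "assignment_plan M 2 q \<mu>'" "induces M 2 t \<mu>' T"
  shows "AE i in M. \<forall>r\<in>{1..2}. \<mu> i r = \<mu>' i r"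
proof -
  have "AE i in M. (\<Sum>r=1..2. \<mu> i r) = 1 \<and> (\<Sum>r=1..2. \<mu>' i r) = 1 \<and>
     (\<Sum>r=1..2. t r * \<mu> i r) = T i \<and> (\<Sum>r=1..2. t r * \<mu>' i r) = T i"
    using assms(2-5) unfolding assignment_plan_def induces_def by auto
  then show ?thesis
  proof eventually_elim
    case (elim i)
    then have a: "\<mu> i 1 + \<mu> i 2 = 1" "\<mu>' i 1 + \<mu>' i 2 = 1"
      "t 1 * \<mu> i 1 + t 2 * \<mu> i 2 = t 1 * \<mu>' i 1 + t 2 * \<mu>' i 2" by (auto simp: sum12)
    have b: "\<mu> i 2 = 1 - \<mu> i 1" "\<mu>' i 2 = 1 - \<mu>' i 1" using a by auto
    have e: "t 1 * \<mu> i 1 + t 2 * (1 - \<mu> i 1) = t 1 * \<mu>' i 1 + t 2 * (1 - \<mu>' i 1)"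
      using a(3) unfolding b .
    then have "(t 1 - t 2) * \<mu> i 1 = (t 1 - t 2) * \<mu>' i 1"
      by algebra
    then have "\<mu> i 1 = \<mu>' i 1" using assms(1) by simp
    then have "\<mu> i 2 = \<mu>' i 2" using a by simp
    then show ?case using \<open>\<mu> i 1 = \<mu>' i 1\<close> by (auto simp: numeral_2_eq_2 le_Suc_eq)
  qed
qed

lemma part3_space:
  fixes M :: "real measure" and a :: real
  assumes R: "R \<ge> 3" and M: "M = restrict_space lebesgue {a..a+1/2}"
  defines "q' \<equiv> (\<lambda>r::nat. if r = 2 then 1/2 else 0 :: real)"
      and "t' \<equiv> (\<lambda>r::nat. real (min r 3))"
  shows "\<exists>T. offer_profile M R q' t' T \<and> \<not> feasible M R q' t' T"
proof -
  have tf: "total_flow R q' = 1/2" using R unfolding total_flow_def q'_def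
    by (subst sum.delta) auto
  have fm: "finite_measure M" and Q: "measure M (space M) = 1/2"
    using driver_fin[of M "1/2"] M unfolding driver_space_def by auto
  interpret finite_measure M by (rule fm)
  have sp: "space M = {a..a+1/2}" using M by (simp add: space_restrict_space)
  define A where "A = {a..a+1/4}"
  have AM: "A \<in> sets M" unfolding M A_def
    by (subst sets_restrict_space_iff) auto
  have eA: "emeasure M A = ennreal (1/4)" unfolding M A_def
    by (subst emeasure_restrict_space) auto
  have AsubS: "A \<subseteq> space M" unfolding sp A_def by auto
  have iA: "integrable M (indicator A :: real \<Rightarrow> real)"
    using AM AsubS eA by (simp add: integrable_indicator_iff Int_absorb2)
  have mA: "measure M A = 1/4" unfolding M A_def
    by (subst measure_restrict_space) auto
  define T where "T = (\<lambda>i::real. if i \<in> A then 1 else 3 :: real)"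
  have T': "T = (\<lambda>i. 3 - 2 * indicator A i)" unfolding T_def by (auto simp: indicator_def)
  have Tm: "T \<in> borel_measurable M" unfolding T' using AM by measurable
  have intT: "(\<integral>i. T i \<partial>M) = 1"
  proof -
    have "(\<integral>i. T i \<partial>M) = (\<integral>i. 3 \<partial>M) - (\<integral>i. 2 * indicator A i \<partial>M)"
      unfolding T' using AM
      by (intro Bochner_Integration.integral_diff) (auto intro: iA)
    also have "\<dots> = 1" using Q mA AsubS by (simp add: Int_absorb2)
    finally show ?thesis .
  qed
  have minmax: "Min (t' ` {1..R}) \<le> 1" "3 \<le> Max (t' ` {1..R})"
  proof -
    have "Min (t' ` {1..R}) \<le> t' 1" using R by (intro Min_le) auto
    then show "Min (t' ` {1..R}) \<le> 1" by (simp add: t'_def)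
    have "t' 3 \<le> Max (t' ` {1..R})" using R by (intro Max_ge) auto
    then show "3 \<le> Max (t' ` {1..R})" by (simp add: t'_def)
  qed
  have sqt: "(\<Sum>r=1..R. q' r * t' r) = 1"
  proof -
    have "(\<Sum>r=1..R. q' r * t' r) = (\<Sum>r=1..R. if r = 2 then 1/2 * t' 2 else 0)"
      by (rule sum.cong) (auto simp: q'_def)
    also have "\<dots> = 1" using R by (subst sum.delta) (auto simp: t'_def)
    finally show ?thesis .
  qed
  have op: "offer_profile M R q' t' T"
    unfolding offer_profile_def
  proof (intro conjI)
    show "AE i in M. T i \<in> {Min (t' ` {1..R})..Max (t' ` {1..R})}"
      using minmax by (intro AE_I2) (auto simp: T_def)
    show "1 / measure M (space M) * integral\<^sup>L M T = 1 / total_flow R q' * (\<Sum>r = 1..R. q' r * t' r)"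
      using Q intT tf sqt by simp
  qed (rule Tm)
  have "\<not> feasible M R q' t' T"
  proof
    assume "feasible M R q' t' T"
    then obtain \<mu> where ap: "assignment_plan M R q' \<mu>" and ind: "induces M R t' \<mu> T"
      unfolding feasible_def by blast
    have meas: "\<forall>r\<in>{1..R}. (\<lambda>i. \<mu> i r) \<in> borel_measurable M"
      and rng: "\<forall>i\<in>space M. \<forall>r\<in>{1..R}. \<mu> i r \<in> {0..1}"
      and int: "\<forall>r\<in>{1..R}. (\<integral>i. \<mu> i r \<partial>M) = q' r"
      and s1: "AE i in M. (\<Sum>r=1..R. \<mu> i r) = 1"
      using ap unfolding assignment_plan_def by auto
    have r1: "(1::nat) \<in> {1..R}" using R by auto
    have intg: "integrable M (\<lambda>i. \<mu> i 1)"
    proof (rule integrable_const_bound[where B=1])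
      show "AE x in M. norm (\<mu> x 1) \<le> 1" using rng r1 by (intro AE_I2) auto
    qed (use meas r1 in auto)
    have "(\<integral>i. \<mu> i 1 \<partial>M) = 0" using int r1 by (simp add: q'_def)
    then have z: "AE i in M. \<mu> i 1 = 0"
      using integral_nonneg_eq_0_iff_AE[OF intg] rng r1 by (auto intro: AE_I2)
    have spae: "AE i in M. i \<in> space M" by (rule AE_I2)
    have "AE i in M. i \<notin> A"
      using z s1 ind[unfolded induces_def] spae
    proof eventually_elim
      case (elim i)
      have "\<And>r. r \<in> {1..R} \<Longrightarrow> 2 * \<mu> i r - (if r = 1 then \<mu> i 1 else 0) \<le> t' r * \<mu> i r"
      proof -
        fix r assume r: "r \<in> {1..R}"
        have "0 \<le> \<mu> i r" using rng elim(4) r by auto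
        show "2 * \<mu> i r - (if r = 1 then \<mu> i 1 else 0) \<le> t' r * \<mu> i r"
        proof (cases "r = 1")
          case False
          then have "2 \<le> t' r" using r by (auto simp: t'_def)
          then show ?thesis using False \<open>0 \<le> \<mu> i r\<close> by (simp add: mult_right_mono)
        qed (simp add: t'_def)
      qed
      then have "(\<Sum>r=1..R. 2 * \<mu> i r - (if r = 1 then \<mu> i 1 else 0)) \<le> (\<Sum>r=1..R. t' r * \<mu> i r)"
        by (intro sum_mono) auto
      moreover have "(\<Sum>r=1..R. 2 * \<mu> i r - (if r = 1 then \<mu> i 1 else 0)) = 2 * 1 - \<mu> i 1"
        using r1 unfolding sum_subtractf sum_distrib_left[symmetric] elim(2)
        by (subst sum.delta) auto
      ultimately have "2 \<le> T i" using elim by simp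
      then show ?case by (auto simp: T_def split: if_splits)
    qed
    then have "emeasure M A = 0"
      using AE_iff_measurable[OF AM, of "\<lambda>i. i \<notin> A"] AsubS by auto
    then show False using eA by simp
  qed
  then show ?thesis using op by blast
qed

lemma part3:
  assumes R: "R \<ge> 3"
  shows "\<exists>q' t' :: nat \<Rightarrow> real.
           (\<forall>r\<in>{1..R}. q' r \<ge> 0) \<and> total_flow R q' > 0 \<and> (\<forall>r\<in>{1..R}. t' r > 0) \<and>
           (\<forall>M' :: real measure. driver_space M' (total_flow R q') \<longrightarrow>
              (\<exists>T. offer_profile M' R q' t' T \<and> \<not> feasible M' R q' t' T))"
proof -
  let ?q = "\<lambda>r::nat. if r = 2 then 1/2 else 0 :: real"
  let ?t = "\<lambda>r::nat. real (min r 3)"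
  have "(\<forall>r\<in>{1..R}. ?q r \<ge> 0) \<and> total_flow R ?q > 0 \<and> (\<forall>r\<in>{1..R}. ?t r > 0) \<and>
           (\<forall>M' :: real measure. driver_space M' (total_flow R ?q) \<longrightarrow>
              (\<exists>T. offer_profile M' R ?q ?t T \<and> \<not> feasible M' R ?q ?t T))"
  proof (intro conjI allI impI)
  have tf: "total_flow R ?q = 1/2" using R unfolding total_flow_def
    by (subst sum.delta) auto
  show "\<forall>r\<in>{1..R}. ?q r \<ge> 0" by auto
  show "total_flow R ?q > 0" using tf by simp
  show "\<forall>r\<in>{1..R}. ?t r > 0" by auto
  fix M' :: "real measure" assume "driver_space M' (total_flow R ?q)"
  then have "(\<exists>a. M' = restrict_space lebesgue {a..a+1/2}) \<or> (\<exists>n::nat. 1/2 = real n)"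
    unfolding tf driver_space_def by blast
  moreover have "\<not> (\<exists>n::nat. 1/2 = real n)"
  proof
    assume "\<exists>n::nat. 1/2 = real n"
    then obtain n :: nat where n: "1/2 = real n" by blast
    have "real (2 * n) = real 1" using n by simp
    then have "2 * n = 1" by (simp only: of_nat_eq_iff)
    then show False by presburger
  qed
  ultimately obtain a where "M' = restrict_space lebesgue {a..a+1/2}" by blast
  from part3_space[OF R this] show "\<exists>T. offer_profile M' R ?q ?t T \<and> \<not> feasible M' R ?q ?t T" .
  qed
  then show ?thesis by (intro exI[of _ ?q] exI[of _ ?t])
qed

theorem proposition1:
  fixes R :: nat and q t :: "nat \<Rightarrow> real" and M :: "real measure"
  assumes "R \<ge> 1"
    and "\<forall>r\<in>{1..R}. q r \<ge> 0"
    and "total_flow R q > 0"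
    and "\<forall>r\<in>{1..R}. t r > 0"
    and "driver_space M (total_flow R q)"
  shows
    "(\<forall>\<mu>. assignment_plan M R q \<mu> \<longrightarrow>
          offer_profile M R q t (\<lambda>i. \<Sum>r=1..R. t r * \<mu> i r))
   \<and> (R = 2 \<longrightarrow>
        (\<forall>T. offer_profile M R q t T \<longrightarrow> feasible M R q t T) \<and>
        (t 1 \<noteq> t 2 \<longrightarrow>
           (\<forall>T \<mu> \<mu>'. assignment_plan M R q \<mu> \<and> induces M R t \<mu> T \<and>
                    assignment_plan M R q \<mu>' \<and> induces M R t \<mu>' T \<longrightarrow>
                    (AE i in M. \<forall>r\<in>{1..R}. \<mu> i r = \<mu>' i r))))
   \<and> (R \<ge> 3 \<longrightarrow>
        (\<exists>q' t' :: nat \<Rightarrow> real.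
           (\<forall>r\<in>{1..R}. q' r \<ge> 0) \<and> total_flow R q' > 0 \<and> (\<forall>r\<in>{1..R}. t' r > 0) \<and>
           (\<forall>M' :: real measure. driver_space M' (total_flow R q') \<longrightarrow>
              (\<exists>T. offer_profile M' R q' t' T \<and> \<not> feasible M' R q' t' T))))"
proof -
  have fm: "finite_measure M" and Q: "measure M (space M) = total_flow R q"
    using driver_fin[OF assms(5) assms(3)] by auto
  show ?thesis
  proof (intro conjI allI impI)
    fix \<mu> assume "assignment_plan M R q \<mu>"
    from part1[OF fm Q assms(3) assms(1) this]
    show "offer_profile M R q t (\<lambda>i. \<Sum>r=1..R. t r * \<mu> i r)" .
  next
    fix T assume R2: "R = 2" and "offer_profile M R q t T"
    then show "feasible M R q t T" using part2a[of M q t T] fm Q assms(2,3) by simp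
  next
    fix T \<mu> \<mu>' assume "R = 2" "t 1 \<noteq> t 2" and
      h: "assignment_plan M R q \<mu> \<and> induces M R t \<mu> T \<and>
                    assignment_plan M R q \<mu>' \<and> induces M R t \<mu>' T"
    then show "AE i in M. \<forall>r\<in>{1..R}. \<mu> i r = \<mu>' i r" using part2b[of t M q \<mu> T \<mu>'] by simp
  next
    assume "R \<ge> 3"
    from part3[OF this] show "\<exists>q' t' :: nat \<Rightarrow> real.
           (\<forall>r\<in>{1..R}. q' r \<ge> 0) \<and> total_flow R q' > 0 \<and> (\<forall>r\<in>{1..R}. t' r > 0) \<and>
           (\<forall>M' :: real measure. driver_space M' (total_flow R q') \<longrightarrow>
              (\<exists>T. offer_profile M' R q' t' T \<and> \<not> feasible M' R q' t' T))" .
  qed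
qed

end
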